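(* Let $N,t,r,K$ be integers with $t,r\ge1$, $m=t+r<N$, $K\ge N$, and let $n_0=K-(N-t)+1$. For $s\ge0$ and $(x,y)\in(0,1]^2$ define $$f(x,y;s)=f_\beta(x;n_0,r,0)\,f_\beta(y;K-(N-t)+r+1,N-t-r,0)\,e^{-s xy}\sum_{k=0}^{n_0}\binom{n_0}{k}\frac{(r-1)!}{(r+k-1)!}[s\,y(1-x)]^k$$ (the joint pdf of the maximal invariant $(p_1,p_2)$ under $H_1$ when $\mathrm{SINR}=s$; the pdf under $H_0$ is $f(x,y;0)$). Then the locally most powerful invariant detector statistic $$t_{\mathrm{LMPID}}=\frac{\left.\frac{\partial f(p_1,p_2;s)}{\partial s}\right|_{s=0}}{f(p_1,p_2;0)}$$ equals $$t_{\mathrm{LMPID}}=\frac{K-(N-t)+1}{r}\,p_2(1-p_1)-p_1p_2,$$ so that the LMPID is the decision rule comparing this quantity with a threshold $\eta$ (deciding $H_1$ when it exceeds $\eta$).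
   Context: $f_\beta(x;n,m,0)=\frac{(n+m-1)!}{(n-1)!(m-1)!}x^{n-1}(1-x)^{m-1}$ is the complex central beta pdf. Here $p_1=1/\bigl(1+\frac{m_1}{1+m_2}\bigr)$, $p_2=1/(1+m_2)$ with $m_1=\mathbf{z}_{2.3}^\dagger\mathbf{S}_{2.3}^{-1}\mathbf{z}_{2.3}$, $m_2=\mathbf{z}_3^\dagger\mathbf{S}_{33}^{-1}\mathbf{z}_3$, where $\mathbf{z}\in\mathbb{C}^N$ is partitioned into blocks $\mathbf{z}_1,\mathbf{z}_2,\mathbf{z}_3$ of sizes $t,r,N-m$, $\mathbf{S}$ (a Hermitian positive definite sample matrix) is partitioned conformably, $\mathbf{z}_{2.3}=\mathbf{z}_2-\mathbf{S}_{23}\mathbf{S}_{33}^{-1}\mathbf{z}_3$ and $\mathbf{S}_{2.3}=\mathbf{S}_{22}-\mathbf{S}_{23}\mathbf{S}_{33}^{-1}\mathbf{S}_{32}$; all that matters for the claim is that $(p_1,p_2)\in(0,1]^2$. *)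

theory Defs
  imports "HOL-Analysis.Analysis"
begin

definition fbeta :: "nat \<Rightarrow> nat \<Rightarrow> real \<Rightarrow> real" where
  "fbeta n m x = fact (n + m - 1) / (fact (n - 1) * fact (m - 1)) * x ^ (n - 1) * (1 - x) ^ (m - 1)"

definition fjoint :: "nat \<Rightarrow> nat \<Rightarrow> nat \<Rightarrow> nat \<Rightarrow> real \<Rightarrow> real \<Rightarrow> real \<Rightarrow> real" where
  "fjoint N t r K x y s =
     (let n0 = K - (N - t) + 1 in
      fbeta n0 r x * fbeta (K - (N - t) + r + 1) (N - t - r) y * exp (- s * x * y) *
      (\<Sum>k = 0..n0. real (n0 choose k) * fact (r - 1) / fact (r + k - 1) * (s * y * (1 - x)) ^ k))"

definition t_LMPID :: "nat \<Rightarrow> nat \<Rightarrow> nat \<Rightarrow> nat \<Rightarrow> real \<Rightarrow> real \<Rightarrow> real" where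
  "t_LMPID N t r K p1 p2 = deriv (\<lambda>s. fjoint N t r K p1 p2 s) 0 / fjoint N t r K p1 p2 0"

end

theory Submission
  imports Defs
begin

theorem proposition3:
  fixes N t r K :: nat and p1 p2 :: real
  assumes "t \<ge> 1" and "r \<ge> 1" and "t + r < N" and "K \<ge> N"
    and "p1 \<in> {0<..1}" and "p2 \<in> {0<..1}"
    and "fjoint N t r K p1 p2 0 \<noteq> 0"
  shows "t_LMPID N t r K p1 p2
           = real (K - (N - t) + 1) / real r * p2 * (1 - p1) - p1 * p2"
proof -
  define n0 where "n0 = K - (N - t) + 1"
  define C where "C = fbeta n0 r p1 * fbeta (K - (N - t) + r + 1) (N - t - r) p2"
  define c where "c = p2 * (1 - p1)"
  define a where "a = (\<lambda>k. real (n0 choose k) * fact (r - 1) / fact (r + k - 1))"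
  have n0: "n0 \<ge> 1" unfolding n0_def by simp
  have F: "\<And>s. fjoint N t r K p1 p2 s = C * exp (- s * p1 * p2) * (\<Sum>k = 0..n0. a k * (s * c) ^ k)"
    unfolding fjoint_def C_def a_def c_def n0_def Let_def
    by (simp add: mult.assoc mult.left_commute)
  have S0: "(\<Sum>k = 0..n0. a k * (0 * c) ^ k) = 1"
  proof -
    have "(\<Sum>k = 0..n0. a k * (0 * c) ^ k) = (\<Sum>k = 0..n0. if k = 0 then a 0 else 0)"
      by (rule sum.cong) auto
    also have "\<dots> = a 0" by simp
    also have "a 0 = 1" unfolding a_def using assms(2) by simp
    finally show ?thesis .
  qed
  have a1: "a 1 = real n0 / real r"
  proof -
    have "fact r = real r * fact (r - 1)"
      using assms(2) by (metis Suc_diff_1 fact_Suc less_le_trans of_nat_Suc zero_less_one)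
    then show ?thesis unfolding a_def using assms(2) by (simp add: field_simps)
  qed
  have D: "((\<lambda>s. \<Sum>k = 0..n0. a k * (s * c) ^ k) has_real_derivative
           (\<Sum>k = 0..n0. a k * (of_nat k * (0 * c) ^ (k - 1) * c))) (at 0)"
    by (auto intro!: derivative_eq_intros sum.cong simp: mult_ac)
  have Dv: "(\<Sum>k = 0..n0. a k * (of_nat k * (0 * c) ^ (k - 1) * c)) = a 1 * c"
  proof -
    have "(\<Sum>k = 0..n0. a k * (of_nat k * (0 * c) ^ (k - 1) * c)) = (\<Sum>k = 0..n0. if k = 1 then a 1 * c else 0)"
      by (rule sum.cong) (auto simp: power_0_left)
    also have "\<dots> = a 1 * c" using n0 by simp
    finally show ?thesis .
  qed
  have DF: "((\<lambda>s. fjoint N t r K p1 p2 s) has_real_derivative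
            C * (exp (- 0 * p1 * p2) * (- p1 * p2)) * 1 + C * exp (- 0 * p1 * p2) * (a 1 * c)) (at 0)"
  proof -
    have E: "((\<lambda>s. C * exp (- s * p1 * p2)) has_real_derivative C * (exp (- 0 * p1 * p2) * (- p1 * p2)) * 1) (at 0)"
      by (auto intro!: derivative_eq_intros)
    have "((\<lambda>s. C * exp (- s * p1 * p2) * (\<Sum>k = 0..n0. a k * (s * c) ^ k)) has_real_derivative
       C * (exp (- 0 * p1 * p2) * (- p1 * p2)) * 1 * (\<Sum>k = 0..n0. a k * (0 * c) ^ k) + C * exp (- 0 * p1 * p2) * (a 1 * c)) (at 0)"
      using DERIV_mult[OF E D] Dv by (simp add: mult_ac)
    then show ?thesis unfolding F S0 by simp
  qed
  have Cne: "C \<noteq> 0" using assms(7) F[of 0] S0 by auto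
  have "t_LMPID N t r K p1 p2 = (C * (- p1 * p2) + C * (a 1 * c)) / C"
    unfolding t_LMPID_def using DERIV_imp_deriv[OF DF] F[of 0] S0 by simp
  also have "\<dots> = a 1 * c - p1 * p2" using Cne by (simp add: field_simps)
  finally show ?thesis unfolding a1 c_def n0_def by simp
qed

end
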